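(* Let $s,t$ be real numbers. For every integer $n\geq 3$, $$\det W_n = (-1)^{n-1}\Big( s^{n-1}t + \Big\lfloor \frac{n}{2}\Big\rfloor\Big\lfloor\frac{n-1}{2}\Big\rfloor s^{n-3}t^3\Big).$$
   Context: All matrices below are $n\times n$ upper Hessenberg with subdiagonal entries $a_{i+1,i}=s$ and $a_{ij}=0$ for $i>j+1$; only the entries $a_{ij}$ with $i\le j$ are specified. For $n = 2k+1$ ($k\ge 1$), $W_n$ has: $a_{1j}=t$ for $1\le j\le k$, $a_{1j}=0$ for $k+1\le j\le 2k$, $a_{1n}=t$; for $2\le i\le k+1$: $a_{ij}=0$ for $i\le j\le k$, $a_{ij}=t$ for $k+1\le j\le 2k$, $a_{in}=0$; for $k+2\le i\le n$: $a_{ij}=0$ for $i\le j\le 2k$, $a_{in}=t$. For $n=2k+2$ ($k\ge 0$), $W_n$ has: $a_{1j}=t$ for $1\le j\le k$, $a_{1j}=0$ for $k+1\le j\le 2k+1$, $a_{1n}=t$; for $2\le i\le k+1$: $a_{ij}=0$ for $i\le j\le k$, $a_{ij}=t$ for $k+1\le j\le 2k+1$, $a_{in}=0$; for $k+2\le i\le n$: $a_{ij}=0$ for $i\le j\le 2k+1$, $a_{in}=t$. *)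

theory Defs
  imports "Jordan_Normal_Form.Determinant"
begin

text \<open>Entry a_{ij} (1-based indices, 1 <= i,j <= n) of the upper Hessenberg matrix W_n
  with subdiagonal s. The parameter k is determined by n = 2k+1 (n odd) or n = 2k+2 (n even).\<close>
definition W_entry :: "nat \<Rightarrow> real \<Rightarrow> real \<Rightarrow> nat \<Rightarrow> nat \<Rightarrow> real" where
  "W_entry n s t i j =
    (if i = j + 1 then s
     else if i > j + 1 then 0
     else if odd n then
       (let k = (n - 1) div 2 in
        if i = 1 then (if j \<le> k then t else if j \<le> 2*k then 0 else t)
        else if i \<le> k + 1 then (if j \<le> k then 0 else if j \<le> 2*k then t else 0)
        else (if j \<le> 2*k then 0 else t))
     else
       (let k = (n - 2) div 2 in
        if i = 1 then (if j \<le> k then t else if j \<le> 2*k+1 then 0 else t)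
        else if i \<le> k + 1 then (if j \<le> k then 0 else if j \<le> 2*k+1 then t else 0)
        else (if j \<le> 2*k+1 then 0 else t)))"

definition W :: "nat \<Rightarrow> real \<Rightarrow> real \<Rightarrow> real mat" where
  "W n s t = mat n n (\<lambda>(i, j). W_entry n s t (i + 1) (j + 1))"

end

theory Submission
  imports Defs
begin

definition Hess :: "real \<Rightarrow> nat \<Rightarrow> (nat \<Rightarrow> nat \<Rightarrow> real) \<Rightarrow> real mat" where
  "Hess s n g = mat n n (\<lambda>(i,j). if i = j + 1 then s else if i > j + 1 then 0 else g i j)"

lemma Hess_carrier: "Hess s n g \<in> carrier_mat n n"
  unfolding Hess_def by auto

lemma Hess_step:
  "det (Hess s (Suc (Suc n)) g) = g (Suc n) (Suc n) * det (Hess s (Suc n) g)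
     - s * det (Hess s (Suc n) (\<lambda>i j. if j = n then g i (Suc n) else g i j))"
proof -
  let ?A = "Hess s (Suc (Suc n)) g"
  have "det ?A = (\<Sum>j<Suc (Suc n). ?A $$ (Suc n, j) * cofactor ?A (Suc n) j)"
    by (rule laplace_expansion_row[OF Hess_carrier]) simp
  also have "\<dots> = ?A $$ (Suc n, n) * cofactor ?A (Suc n) n + ?A $$ (Suc n, Suc n) * cofactor ?A (Suc n) (Suc n)"
  proof -
    have "(\<Sum>j<n. ?A $$ (Suc n, j) * cofactor ?A (Suc n) j) = 0"
      by (rule sum.neutral) (auto simp: Hess_def)
    then show ?thesis by simp
  qed
  moreover have "mat_delete ?A (Suc n) (Suc n) = Hess s (Suc n) g"
    by (rule eq_matI) (auto simp: Hess_def mat_delete_def)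
  moreover have "mat_delete ?A (Suc n) n = Hess s (Suc n) (\<lambda>i j. if j = n then g i (Suc n) else g i j)"
    by (rule eq_matI) (auto simp: Hess_def mat_delete_def)
  ultimately show ?thesis
    by (simp add: cofactor_def Hess_def)
qed

lemma Hess_cong: "m \<le> n \<Longrightarrow> (\<And>i j. j < m \<Longrightarrow> g i j = h i j) \<Longrightarrow> Hess s m g = Hess s m h"
  by (rule eq_matI) (auto simp: Hess_def)

lemma Hess0: "det (Hess s 0 g) = 1"
  by (simp add: Hess_def det_def)

lemma Hess_rec:
  "det (Hess s (Suc n) g) = (\<Sum>i\<le>n. (-s) ^ (n - i) * g i n * det (Hess s i g))"
proof (induction n arbitrary: g)
  case 0
  have "Hess s 1 g = mat 1 1 (\<lambda>_. g 0 0)"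
    by (rule eq_matI) (auto simp: Hess_def)
  then show ?case by (simp add: det_single Hess0)
next
  case (Suc n)
  define g' where "g' = (\<lambda>i j. if j = n then g i (Suc n) else g i j)"
  have eq: "det (Hess s i g') = det (Hess s i g)" if "i \<le> n" for i
    using that by (subst Hess_cong[of i i g' g]) (auto simp: g'_def)
  have "det (Hess s (Suc (Suc n)) g) = g (Suc n) (Suc n) * det (Hess s (Suc n) g) - s * det (Hess s (Suc n) g')"
    unfolding g'_def by (rule Hess_step)
  also have "det (Hess s (Suc n) g') = (\<Sum>i\<le>n. (-s) ^ (n - i) * g i (Suc n) * det (Hess s i g))"
  proof -
    have eq': "g' i n = g i (Suc n)" for i by (simp add: g'_def)
    show ?thesis unfolding Suc.IH by (rule sum.cong) (auto simp: eq eq')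
  qed
  also have "s * \<dots> = - (\<Sum>i\<le>n. (-s) ^ (Suc n - i) * g i (Suc n) * det (Hess s i g))"
    by (simp add: sum_distrib_left Suc_diff_le sum_negf[symmetric] mult_ac)
  finally show ?case by simp
qed

lemma W_eq_Hess: "W n s t = Hess s n (\<lambda>i j. W_entry n s t (i+1) (j+1))"
  by (rule eq_matI) (auto simp: W_def Hess_def W_entry_def)

lemma main_gen:
  fixes s t :: real and k m :: nat
  assumes k1: "1 \<le> k" and km: "k < m"
    and g0: "\<And>j. j < k \<Longrightarrow> g 0 j = t"
    and g0b: "\<And>j. k \<le> j \<Longrightarrow> j < m \<Longrightarrow> g 0 j = 0"
    and g0m: "g 0 m = t"
    and g1: "\<And>i j. 1 \<le> i \<Longrightarrow> i \<le> k \<Longrightarrow> i \<le> j \<Longrightarrow> j < k \<Longrightarrow> g i j = 0"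
    and g1b: "\<And>i j. 1 \<le> i \<Longrightarrow> i \<le> k \<Longrightarrow> k \<le> j \<Longrightarrow> j < m \<Longrightarrow> g i j = t"
    and g1m: "\<And>i. 1 \<le> i \<Longrightarrow> i \<le> k \<Longrightarrow> g i m = 0"
    and g2: "\<And>i j. k < i \<Longrightarrow> i \<le> j \<Longrightarrow> j < m \<Longrightarrow> g i j = 0"
    and g2m: "\<And>i. k < i \<Longrightarrow> i \<le> m \<Longrightarrow> g i m = t"
  shows "det (Hess s (Suc m) g) = (-s) ^ m * t + real (k * (m - k)) * (-s) ^ (m - 2) * t ^ 3"
proof -
  have g0b': "g i j = 0" if "\<not> 1 \<le> i" "k \<le> j" "j < m" for i j
    using that g0b[of j] by (cases i) auto
  define D where "D i = det (Hess s i g)" for i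
  have D0: "D 0 = 1" unfolding D_def by (rule Hess0)
  have rec: "D (Suc j) = (\<Sum>i\<le>j. (-s) ^ (j - i) * g i j * D i)" for j
    unfolding D_def by (rule Hess_rec)
  have Da: "D (Suc j) = (-s) ^ j * t" if "j < k" for j
  proof -
    have "D (Suc j) = (\<Sum>i\<in>{0}. (-s) ^ (j - i) * g i j * D i)"
      unfolding rec by (rule sum.mono_neutral_right) (use that in \<open>auto simp: g1\<close>)
    then show ?thesis using that by (simp add: g0 D0)
  qed
  have Db: "D (Suc j) = real k * (-s) ^ (j - 1) * t ^ 2" if "k \<le> j" "j < m" for j
  proof -
    have "D (Suc j) = (\<Sum>i\<in>{1..k}. (-s) ^ (j - i) * g i j * D i)"
      unfolding rec by (rule sum.mono_neutral_right) (use that in \<open>auto simp: g0b' g2\<close>)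
    also have "\<dots> = (\<Sum>i\<in>{1..k}. real 1 * (-s) ^ (j - 1) * t ^ 2)"
    proof (rule sum.cong)
      fix i assume i: "i \<in> {1..k}"
      then obtain i' where i': "i = Suc i'" "i' < k" by (cases i) auto
      have "(-s) ^ (j - i) * (-s) ^ i' = (-s) ^ (j - 1)"
        using i' that by (simp add: power_add[symmetric])
      then show "(-s) ^ (j - i) * g i j * D i = real 1 * (-s) ^ (j - 1) * t ^ 2"
        using i i' that by (simp add: g1b Da power2_eq_square mult_ac)
    qed simp
    finally show ?thesis by simp
  qed
  have "D (Suc m) = (\<Sum>i\<in>insert 0 {Suc k..m}. (-s) ^ (m - i) * g i m * D i)"
    unfolding rec by (rule sum.mono_neutral_right) (auto simp: g1m)
  also have "\<dots> = (-s) ^ m * t + (\<Sum>i\<in>{Suc k..m}. (-s) ^ (m - i) * g i m * D i)"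
    using k1 by (simp add: g0m D0)
  also have "(\<Sum>i\<in>{Suc k..m}. (-s) ^ (m - i) * g i m * D i) = (\<Sum>i\<in>{Suc k..m}. real k * (-s) ^ (m - 2) * t ^ 3)"
  proof (rule sum.cong)
    fix i assume i: "i \<in> {Suc k..m}"
    then obtain i' where i': "i = Suc i'" "k \<le> i'" "i' < m" by (cases i) auto
    have "(-s) ^ (m - i) * (-s) ^ (i' - 1) = (-s) ^ (m - 2)"
      using i' k1 by (simp add: power_add[symmetric] numeral_2_eq_2)
    then show "(-s) ^ (m - i) * g i m * D i = real k * (-s) ^ (m - 2) * t ^ 3"
      using i i' by (simp add: g2m Db power3_eq_cube power2_eq_square mult_ac)
  qed simp
  finally show ?thesis unfolding D_def by (simp add: mult_ac)
qed

lemma odd_case: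
  fixes s t :: real assumes "1 \<le> k"
  shows "det (W (2*k+1) s t) = (-s) ^ (2*k) * t + real (k * k) * (-s) ^ (2*k - 2) * t ^ 3"
proof -
  have "W (2*k+1) s t = Hess s (Suc (2*k)) (\<lambda>i j. W_entry (2*k+1) s t (i+1) (j+1))"
    unfolding W_eq_Hess by simp
  also have "det \<dots> = (-s) ^ (2*k) * t + real (k * (2*k - k)) * (-s) ^ (2*k - 2) * t ^ 3"
    by (rule main_gen) (use assms in \<open>simp_all add: W_entry_def Let_def\<close>)
  finally show ?thesis by (simp add: mult_2)
qed

lemma even_case:
  fixes s t :: real assumes "1 \<le> k"
  shows "det (W (2*k+2) s t) = (-s) ^ (2*k+1) * t + real (k * (k+1)) * (-s) ^ (2*k + 1 - 2) * t ^ 3"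
proof -
  have "W (2*k+2) s t = Hess s (Suc (2*k+1)) (\<lambda>i j. W_entry (2*k+2) s t (i+1) (j+1))"
    unfolding W_eq_Hess by simp
  also have "det \<dots> = (-s) ^ (2*k+1) * t + real (k * (2*k+1 - k)) * (-s) ^ (2*k + 1 - 2) * t ^ 3"
    by (rule main_gen) (use assms in \<open>simp_all add: W_entry_def Let_def\<close>)
  finally show ?thesis by (simp add: mult_2)
qed

theorem proposition5p5:
  fixes s t :: real and n :: nat
  assumes "n \<ge> 3"
  shows "det (W n s t) = (-1) ^ (n - 1) *
           (s ^ (n - 1) * t + real ((n div 2) * ((n - 1) div 2)) * s ^ (n - 3) * t ^ 3)"
proof (cases "odd n")
  case True
  then obtain k where n: "n = 2*k+1" using oddE by blast
  with assms have k: "1 \<le> k" by simp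
  have e1: "(-s) ^ (2*k) = s ^ (2*k)" by (rule power_minus_even) simp
  have e2: "(-s) ^ (2*k-2) = s ^ (2*k-2)" by (rule power_minus_even) (use k in presburger)
  have h: "n div 2 = k" "(n - 1) div 2 = k" "n - 1 = 2*k" "n - 3 = 2*k - 2" using n by auto
  have "det (W n s t) = s ^ (2*k) * t + real (k * k) * s ^ (2*k - 2) * t ^ 3"
    using odd_case[OF k, of s t] unfolding n e1 e2 .
  then show ?thesis unfolding h by simp
next
  case False
  then obtain a where n0: "n = 2*a" using evenE by blast
  define k where "k = a - 1"
  have n: "n = 2*k+2" using n0 assms by (simp add: k_def)
  with assms have k: "1 \<le> k" by simp
  have e1: "(-s) ^ (2*k+1) = -(s ^ (2*k+1))" by (rule power_minus_odd) simp
  have e2: "(-s) ^ (2*k+1-2) = -(s ^ (2*k+1-2))" by (rule power_minus_odd) (use k in presburger)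
  have h: "n div 2 = k+1" "(n - 1) div 2 = k" "n - 1 = 2*k+1" "n - 3 = 2*k+1-2" using n by auto
  have "det (W n s t) = -(s ^ (2*k+1)) * t + real (k * (k+1)) * (-(s ^ (2*k+1-2))) * t ^ 3"
    using even_case[OF k, of s t] unfolding n e1 e2 .
  then show ?thesis unfolding h by (simp add: mult.commute)
qed

end
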